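(* Let $p\in\mathbb{N}$. Let $g:\mathcal{S}_{++}^p\to[0,\infty)$ be a matrix-variate Bernstein function with triplet $(0_{p\times p},B,\mu)$, where $\mu$ is a probability measure on $\mathcal{S}_{++}^p$. If the map $\phi:[0,\infty)\to[0,\infty)$ is continuous, completely monotone on $(0,\infty)$ and satisfies $\phi(0)=1$, then the composition $\psi=\phi\circ g:\mathcal{S}_{++}^p\to[0,\infty)$ is a matrix-variate completely monotone function.
   Context: $\mathcal{S}^p$, $\mathcal{S}_+^p$, $\mathcal{S}_{++}^p$ denote the real symmetric, symmetric nonnegative definite, and symmetric positive definite $p\times p$ matrices; $\mathrm{etr}(\cdot)=\exp\{\mathrm{tr}(\cdot)\}$. A map $\phi:(0,\infty)\to[0,\infty)$ is completely monotone if it is infinitely differentiable and $(-1)^n\phi^{(n)}\ge 0$ for all $n\in\mathbb{N}$. A map $\psi:\mathcal{S}_{++}^p\to[0,\infty)$ is matrix-variate completely monotone if there is a measure $\nu$ on $\mathcal{S}_+^p$ with $\psi(T)=\int_{\mathcal{S}_+^p}\mathrm{etr}(-TX)\,\nu(\mathrm{d}X)$ for all $T\in\mathcal{S}_{++}^p$. A map $g:\mathcal{S}_{++}^p\to[0,\infty)$ is a matrix-variate Bernstein function with triplet $(A,B,\mu)$ if $A,B\in\mathcal{S}_+^p$, $\mu$ is a measure on $\mathcal{S}_{++}^p$ with $\int_{\mathcal{S}_{++}^p}\min[1,\{\mathrm{tr}(X^2)\}^{1/2}]\,\mu(\mathrm{d}X)<\infty$, and for all $T\in\mathcal{S}_{++}^p$,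 $g(T)=\mathrm{tr}(A)+\mathrm{tr}(BT)+\int_{\mathcal{S}_{++}^p}\{1-\mathrm{etr}(-TX)\}\,\mu(\mathrm{d}X)$. *)

theory Defs
  imports "HOL-Analysis.Analysis" "HOL-Probability.Probability"
begin

text \<open>p x p real matrices are modelled as real^'p^'p, with 'p a finite index type (p = CARD('p)).\<close>

definition etr :: "real^'p^'p \<Rightarrow> real" where
  "etr M = exp (trace M)"

definition Sym :: "(real^'p^'p) set" where
  "Sym = {A. transpose A = A}"

definition Spsd :: "(real^'p^'p) set" where
  "Spsd = {A. A \<in> Sym \<and> (\<forall>x. 0 \<le> x \<bullet> (A *v x))}"

definition Spd :: "(real^'p^'p) set" where
  "Spd = {A. A \<in> Sym \<and> (\<forall>x. x \<noteq> 0 \<longrightarrow> 0 < x \<bullet> (A *v x))}"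

definition completely_monotone :: "(real \<Rightarrow> real) \<Rightarrow> bool" where
  "completely_monotone \<phi> \<longleftrightarrow>
     (\<forall>n. \<forall>x>0. ((deriv ^^ n) \<phi>) differentiable (at x)) \<and>
     (\<forall>n. \<forall>x>0. 0 \<le> (-1) ^ n * (deriv ^^ n) \<phi> x)"

definition mv_completely_monotone :: "(real^'p^'p \<Rightarrow> real) \<Rightarrow> bool" where
  "mv_completely_monotone \<psi> \<longleftrightarrow>
     (\<forall>T\<in>Spd. 0 \<le> \<psi> T) \<and>
     (\<exists>\<nu>::(real^'p^'p) measure. sets \<nu> = sets (restrict_space borel Spsd) \<and>
        (\<forall>T\<in>Spd. ennreal (\<psi> T) = (\<integral>\<^sup>+ X. ennreal (etr (- (T ** X))) \<partial>\<nu>)))"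

definition mv_bernstein ::
  "(real^'p^'p \<Rightarrow> real) \<Rightarrow> real^'p^'p \<Rightarrow> real^'p^'p \<Rightarrow> (real^'p^'p) measure \<Rightarrow> bool" where
  "mv_bernstein g A B \<mu> \<longleftrightarrow>
     A \<in> Spsd \<and> B \<in> Spsd \<and>
     sets \<mu> = sets (restrict_space borel Spd) \<and>
     (\<integral>\<^sup>+ X. ennreal (min 1 (sqrt (trace (X ** X)))) \<partial>\<mu>) < \<infinity> \<and>
     (\<forall>T\<in>Spd. 0 \<le> g T \<and>
        g T = trace A + trace (B ** T) + (\<integral> X. (1 - etr (- (T ** X))) \<partial>\<mu>))"

end

theory Submission
  imports Defs "HOL-Computational_Algebra.Polynomial"
begin

lemma mv_axis_comp: "((A::real^'n^'n) *v axis j c) $ i = A$i$j * c"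
  by (simp add: matrix_vector_mult_def axis_def if_distrib cong: if_cong)

lemma inner_axis_mv: "axis i c \<bullet> ((A::real^'n^'n) *v y) = c * (A *v y) $ i"
  by (simp add: inner_axis')

lemma quad_add: "(x + y) \<bullet> ((A::real^'n^'n) *v (x + y)) =
   x \<bullet> (A *v x) + x \<bullet> (A *v y) + y \<bullet> (A *v x) + y \<bullet> (A *v y)"
  by (simp add: matrix_vector_right_distrib inner_add_left inner_add_right)

lemma sym_inner: "transpose A = A \<Longrightarrow> x \<bullet> ((A::real^'n^'n) *v y) = y \<bullet> (A *v x)"
  by (metis dot_lmul_matrix inner_commute transpose_transpose vector_transpose_matrix)

lemma trace_outer: "trace ((T::real^'n^'n) ** (\<chi> i j. u$i * u$j)) = u \<bullet> (T *v u)"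
  by (simp add: trace_def matrix_matrix_mult_def inner_vec_def matrix_vector_mult_def
      sum_distrib_left sum_distrib_right mult_ac)

lemma mat_mult_scaleR_right: "(A::real^'n^'m) ** (c *\<^sub>R B) = c *\<^sub>R (A ** (B::real^'k^'n))"
  by (simp add: matrix_matrix_mult_def vec_eq_iff sum_distrib_left mult_ac)

lemma trace_scaleR: "trace (c *\<^sub>R (A::real^'n^'n)) = c * trace A"
  by (simp add: trace_def sum_distrib_left)

lemma psd_row_zero:
  assumes X: "(X::real^'n^'n) \<in> Spsd" and d: "X$a$a = 0"
  shows "X$a$j = 0"
proof (cases "j = a")
  case True then show ?thesis using d by simp
next
  case False
  have sym: "transpose X = X" using X by (simp add: Spsd_def Sym_def)
  have q: "\<forall>x. 0 \<le> x \<bullet> (X *v x)" using X by (simp add: Spsd_def)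
  have e: "(axis a t + axis j 1) \<bullet> (X *v (axis a t + axis j 1)) = 2 * t * X$a$j + X$j$j" for t
  proof -
    have "axis j 1 \<bullet> (X *v axis a t) = axis a t \<bullet> (X *v axis j 1)"
      using sym_inner[OF sym] by metis
    moreover have "axis a t \<bullet> (X *v axis j 1) = t * X$a$j"
      by (simp add: inner_axis_mv mv_axis_comp)
    moreover have "axis a t \<bullet> (X *v axis a t) = 0"
      by (simp add: inner_axis_mv mv_axis_comp d)
    moreover have "axis j 1 \<bullet> (X *v axis j 1) = X$j$j"
      by (simp add: inner_axis_mv mv_axis_comp)
    ultimately show ?thesis by (simp add: quad_add)
  qed
  have ge: "0 \<le> 2 * t * X$a$j + X$j$j" for t
    using q e by metis
  show ?thesis
  proof (rule ccontr)
    assume nz: "X$a$j \<noteq> 0"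
    define t where "t = - (X$j$j + 1) / (2 * X$a$j)"
    have "2 * t * X$a$j = - (X$j$j + 1)" using nz by (simp add: t_def field_simps)
    with ge[of t] show False by linarith
  qed
qed

lemma trace_psd_aux:
  assumes T: "\<forall>x. 0 \<le> x \<bullet> ((T::real^'n^'n) *v x)"
  shows "finite S \<Longrightarrow> \<forall>X::real^'n^'n. X \<in> Spsd \<and> (\<forall>i j. i \<notin> S \<longrightarrow> X$i$j = 0) \<longrightarrow> 0 \<le> trace (T ** X)"
proof (induction S rule: finite_induct)
  case empty
  show ?case
  proof (intro allI impI)
    fix X :: "real^'n^'n" assume "X \<in> Spsd \<and> (\<forall>i j. i \<notin> {} \<longrightarrow> X$i$j = 0)"
    then have "X = 0" by (simp add: vec_eq_iff)
    then show "0 \<le> trace (T ** X)" by (simp add: trace_def)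
  qed
next
  case (insert a S)
  show ?case
  proof (intro allI impI)
    fix X :: "real^'n^'n" assume H: "X \<in> Spsd \<and> (\<forall>i j. i \<notin> insert a S \<longrightarrow> X$i$j = 0)"
    have X: "X \<in> Spsd" using H by blast
    have sym: "transpose X = X" using X by (simp add: Spsd_def Sym_def)
    have symc: "X$i$j = X$j$i" for i j using sym by (metis transpose_def vec_lambda_beta)
    have q: "\<forall>x. 0 \<le> x \<bullet> (X *v x)" using X by (simp add: Spsd_def)
    show "0 \<le> trace (T ** X)"
    proof (cases "X$a$a = 0")
      case True
      have "\<forall>i j. i \<notin> S \<longrightarrow> X$i$j = 0"
        using H psd_row_zero[OF X True] by (metis insert_iff)
      then show ?thesis using insert.IH X by blast
    next
      case False
      define d where "d = X$a$a"
      have d0: "0 < d"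
      proof -
        have "0 \<le> axis a 1 \<bullet> (X *v axis a 1)" using q by blast
        then have "0 \<le> d" by (simp add: inner_axis_mv mv_axis_comp d_def)
        then show ?thesis using False d_def by simp
      qed
      define u where "u = (\<chi> i. X$i$a)"
      define Om where "Om = (\<chi> i j. u$i * u$j)"
      define Y where "Y = X - (1/d) *\<^sub>R Om"
      have XY: "X = Y + (1/d) *\<^sub>R Om" by (simp add: Y_def)
      have Omu: "Om *v x = (u \<bullet> x) *\<^sub>R u" for x
        by (simp add: Om_def vec_eq_iff matrix_vector_mult_def inner_vec_def sum_distrib_left mult_ac)
      have Xa: "X *v axis a 1 = u"
        by (simp add: vec_eq_iff mv_axis_comp u_def)
      have uxa: "u \<bullet> axis a 1 = d" by (simp add: inner_axis u_def d_def)
      have Ysym: "transpose Y = Y"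
        by (simp add: Y_def transpose_def vec_eq_iff Om_def mult.commute symc)
      have Yq: "0 \<le> x \<bullet> (Y *v x)" for x
      proof -
        define c where "c = (u \<bullet> x) / d"
        define y where "y = x + (- c) *\<^sub>R axis a 1"
        have "0 \<le> y \<bullet> (X *v y)" using q by blast
        also have "y \<bullet> (X *v y) = x \<bullet> (X *v x) - (u \<bullet> x)^2 / d"
        proof -
          have a1: "x \<bullet> (X *v ((- c) *\<^sub>R axis a 1)) = - c * (u \<bullet> x)"
            by (subst matrix_vector_mult_scaleR) (simp add: Xa inner_commute)
          have a2: "((- c) *\<^sub>R axis a 1) \<bullet> (X *v x) = - c * (u \<bullet> x)"
            using a1 sym_inner[OF sym] by metis
          have a3: "((- c) *\<^sub>R axis a 1) \<bullet> (X *v ((- c) *\<^sub>R axis a 1)) = c^2 * d"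
            by (subst matrix_vector_mult_scaleR) (simp add: Xa inner_commute uxa power2_eq_square)
          show ?thesis unfolding y_def quad_add a1 a2 a3
            using d0 by (simp add: c_def power2_eq_square field_simps)
        qed
        also have "\<dots> = x \<bullet> (Y *v x)"
          using d0 by (simp add: Y_def matrix_vector_mult_diff_rdistrib matrix_scaleR_vector_ac[symmetric]
              matrix_vector_mult_scaleR Omu inner_diff_right power2_eq_square inner_commute)
        finally show ?thesis .
      qed
      have Ypsd: "Y \<in> Spsd" using Ysym Yq by (simp add: Spsd_def Sym_def)
      have Yrows: "\<forall>i j. i \<notin> S \<longrightarrow> Y$i$j = 0"
      proof (intro allI impI)
        fix i j assume iS: "i \<notin> S"
        show "Y$i$j = 0"
        proof (cases "i = a")
          case True
          then show ?thesis using d0 by (simp add: Y_def Om_def u_def d_def symc)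
        next
          case False
          then have "X$i$j = 0" "X$i$a = 0" using H iS by auto
          then show ?thesis by (simp add: Y_def Om_def u_def)
        qed
      qed
      have "0 \<le> trace (T ** Y)" using insert.IH Ypsd Yrows by blast
      moreover have "0 \<le> trace (T ** Om)" unfolding Om_def trace_outer using T by blast
      moreover have "trace (T ** X) = trace (T ** Y) + (1/d) * trace (T ** Om)"
        unfolding XY matrix_add_ldistrib trace_add
        by (simp add: mat_mult_scaleR_right trace_scaleR)
      ultimately show ?thesis using d0 by simp
    qed
  qed
qed

lemma trace_psd:
  assumes "(T::real^'n^'n) \<in> Spsd" "X \<in> Spsd"
  shows "0 \<le> trace (T ** X)"
  using trace_psd_aux[of T UNIV] assms by (simp add: Spsd_def)


lemma entry_inner: "(X::real^'n^'m)$k$i = X \<bullet> axis k (axis i 1)"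
  by (simp only: inner_axis) simp
lemma meas_entry[measurable]: "(\<lambda>X::real^'n^'m. X$k$i) \<in> borel_measurable borel"
  unfolding entry_inner by measurable
lemma cont_entry[continuous_intros]: "continuous_on S (\<lambda>X::real^'n^'m. X$k$i)"
  unfolding entry_inner by (intro continuous_intros)
lemma quad_sum: "x \<bullet> ((A::real^'n^'n) *v x) = (\<Sum>i\<in>UNIV. x$i * (\<Sum>j\<in>UNIV. A$i$j * x$j))"
  by (simp add: inner_vec_def matrix_vector_mult_def)
lemma Spsd_closed: "closed (Spsd :: (real^'n^'n) set)"
proof -
  have e: "Spsd = (\<Inter>i. \<Inter>j. {A::real^'n^'n. A$i$j = A$j$i}) \<inter> (\<Inter>x. {A. 0 \<le> x \<bullet> (A *v x)})"
    by (auto simp: Spsd_def Sym_def transpose_def vec_eq_iff)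
  have c1: "closed {A::real^'n^'n. A$i$j = A$j$i}" for i j
    by (intro closed_Collect_eq cont_entry) 
  have c2: "closed {A::real^'n^'n. 0 \<le> x \<bullet> (A *v x)}" for x
    unfolding quad_sum by (intro closed_Collect_le continuous_intros) 
  show ?thesis unfolding e by (intro closed_Int closed_INT ballI c1 c2)
qed

lemma trace_mult_eq: "trace ((T::real^'n^'n) ** X) = (\<Sum>i\<in>UNIV. \<Sum>k\<in>UNIV. T$i$k * X$k$i)"
  by (simp add: trace_def matrix_matrix_mult_def)

lemma meas_trace[measurable]: "(\<lambda>X. trace ((T::real^'n^'n) ** X)) \<in> borel_measurable borel"
  unfolding trace_mult_eq by measurable

lemma etr_neg: "etr (- ((T::real^'n^'n) ** X)) = exp (- trace (T ** X))"
  by (simp add: etr_def trace_def sum_negf)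

lemma meas_etr[measurable]: "(\<lambda>X. etr (- ((T::real^'n^'n) ** X))) \<in> borel_measurable borel"
  unfolding etr_neg by measurable

lemma etr_nonneg[simp]: "0 \<le> etr M"
  by (simp add: etr_def)

lemma etr_add: "etr (- ((T::real^'n^'n) ** (X + Y))) = etr (- (T ** X)) * etr (- (T ** Y))"
  unfolding etr_neg by (simp add: matrix_add_ldistrib trace_add exp_add[symmetric])

primrec cpow :: "(real^'n^'n) measure \<Rightarrow> nat \<Rightarrow> (real^'n^'n) measure" where
  "cpow M 0 = return borel 0"
| "cpow M (Suc k) = distr (M \<Otimes>\<^sub>M cpow M k) borel (\<lambda>(x,y). x + y)"

lemma Spsd_add: "A \<in> Spsd \<Longrightarrow> B \<in> Spsd \<Longrightarrow> A + B \<in> Spsd"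
  by (simp add: Spsd_def Sym_def transpose_def vec_eq_iff matrix_vector_mult_add_rdistrib inner_add_right add_nonneg_nonneg)

lemma Spsd_scale: "A \<in> Spsd \<Longrightarrow> 0 \<le> c \<Longrightarrow> c *\<^sub>R A \<in> Spsd"
  by (simp add: Spsd_def Sym_def transpose_def vec_eq_iff matrix_scaleR_vector_ac[symmetric]
      matrix_vector_mult_scaleR)

lemma Spsd_0: "0 \<in> Spsd"
  by (simp add: Spsd_def Sym_def transpose_def vec_eq_iff)


lemma Spsd_sets[measurable]: "(Spsd :: (real^'n^'n) set) \<in> sets borel"
  using Spsd_closed by (rule borel_closed)

lemma cpow_props:
  fixes M :: "(real^'n^'n) measure"
  assumes P: "prob_space M" and S: "sets M = sets borel" and A: "AE x in M. x \<in> Spsd"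
  shows "prob_space (cpow M k) \<and> sets (cpow M k) = sets borel \<and> (AE x in cpow M k. x \<in> Spsd)"
proof (induction k)
  case 0
  show ?case unfolding cpow.simps by (simp add: prob_space_return Spsd_0 AE_return)
next
  case (Suc k)
  have P2: "prob_space (cpow M k)" and S2: "sets (cpow M k) = sets borel"
    and A2: "AE x in cpow M k. x \<in> Spsd" using Suc by auto
  have meas: "(\<lambda>(x,y). x + y) \<in> measurable (M \<Otimes>\<^sub>M cpow M k) (borel :: (real^'n^'n) measure)"
    by (subst measurable_cong_sets[OF sets_pair_measure_cong[OF S S2] refl]) measurable
  interpret pr: prob_space "M \<Otimes>\<^sub>M cpow M k" by (intro prob_space_pair P P2)
  interpret ps: pair_sigma_finite M "cpow M k"
    by (intro pair_sigma_finite.intro prob_space_imp_sigma_finite P P2)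
  have "prob_space (cpow M (Suc k))" using pr.prob_space_distr[OF meas] by simp
  moreover have "sets (cpow M (Suc k)) = sets borel" by simp
  moreover have "AE z in cpow M (Suc k). z \<in> Spsd"
  proof -
    have "AE p in M \<Otimes>\<^sub>M cpow M k. fst p \<in> Spsd \<and> snd p \<in> Spsd"
    proof (rule ps.AE_pair_measure)
      have sp: "space (M \<Otimes>\<^sub>M cpow M k) = UNIV"
        by (simp add: space_pair_measure sets_eq_imp_space_eq[OF S] sets_eq_imp_space_eq[OF S2])
      show "{x \<in> space (M \<Otimes>\<^sub>M cpow M k). fst x \<in> Spsd \<and> snd x \<in> Spsd} \<in> sets (M \<Otimes>\<^sub>M cpow M k)"
      proof -
        have "{x \<in> space (M \<Otimes>\<^sub>M cpow M k). fst x \<in> Spsd \<and> snd x \<in> Spsd} = Spsd \<times> Spsd"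
          using sp by auto
        moreover have "Spsd \<times> Spsd \<in> sets (M \<Otimes>\<^sub>M cpow M k)"
          by (rule pair_measureI) (simp_all add: S S2)
        ultimately show ?thesis by simp
      qed
      show "AE x in M. AE y in cpow M k. fst (x, y) \<in> Spsd \<and> snd (x, y) \<in> Spsd"
        using A
      proof eventually_elim
        fix x assume x: "x \<in> Spsd"
        show "AE y in cpow M k. fst (x, y) \<in> Spsd \<and> snd (x, y) \<in> Spsd"
          using A2 by (rule AE_mp) (intro AE_I2, simp add: x)
      qed
    qed
    then have "AE p in M \<Otimes>\<^sub>M cpow M k. (case p of (x,y) \<Rightarrow> x + y) \<in> Spsd"
      by eventually_elim (auto simp: Spsd_add)
    then show ?thesis unfolding cpow.simps by (subst AE_distr_iff[OF meas]) simp_all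
  qed
  ultimately show ?case by blast
qed

lemma cpow_nn:
  fixes M :: "(real^'n^'n) measure"
  assumes P: "prob_space M" and S: "sets M = sets borel" and A: "AE x in M. x \<in> Spsd"
  shows "(\<integral>\<^sup>+ x. ennreal (etr (- ((T::real^'n^'n) ** x))) \<partial>cpow M k) = (\<integral>\<^sup>+ x. ennreal (etr (- (T ** x))) \<partial>M) ^ k"
proof (induction k)
  case 0
  have m: "(\<lambda>x. ennreal (etr (- (T ** x)))) \<in> borel_measurable borel" by measurable
  show ?case unfolding cpow.simps by (subst nn_integral_return[OF _ m]) (auto simp: etr_def trace_def)
next
  case (Suc k)
  have P2: "prob_space (cpow M k)" and S2: "sets (cpow M k) = sets borel"
    using cpow_props[OF P S A] by auto
  have meas: "(\<lambda>(x,y). x + y) \<in> measurable (M \<Otimes>\<^sub>M cpow M k) (borel :: (real^'n^'n) measure)"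
    by (subst measurable_cong_sets[OF sets_pair_measure_cong[OF S S2] refl]) measurable
  interpret s2: sigma_finite_measure "cpow M k" by (intro prob_space_imp_sigma_finite P2)
  let ?E = "\<lambda>x. ennreal (etr (- (T ** x)))"
  have mE: "?E \<in> borel_measurable M" by (subst measurable_cong_sets[OF S refl]) measurable
  have mE2: "?E \<in> borel_measurable (cpow M k)" by (subst measurable_cong_sets[OF S2 refl]) measurable
  have "(\<integral>\<^sup>+ z. ?E z \<partial>cpow M (Suc k)) = (\<integral>\<^sup>+ p. ?E (case p of (x,y) \<Rightarrow> x + y) \<partial>(M \<Otimes>\<^sub>M cpow M k))"
    by (simp add: nn_integral_distr[OF meas])
  also have "\<dots> = (\<integral>\<^sup>+ x. \<integral>\<^sup>+ y. ?E (x + y) \<partial>cpow M k \<partial>M)"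
  proof -
    have mF: "(\<lambda>p. ?E (case p of (x,y) \<Rightarrow> x + y)) \<in> borel_measurable (M \<Otimes>\<^sub>M cpow M k)"
      by (subst measurable_cong_sets[OF sets_pair_measure_cong[OF S S2] refl]) measurable
    show ?thesis using s2.nn_integral_fst[OF mF] by simp
  qed
  also have "\<dots> = (\<integral>\<^sup>+ x. ?E x * (\<integral>\<^sup>+ y. ?E y \<partial>cpow M k) \<partial>M)"
    by (simp add: etr_add ennreal_mult nn_integral_cmult[OF mE2])
  also have "\<dots> = (\<integral>\<^sup>+ x. ?E x \<partial>M) * (\<integral>\<^sup>+ y. ?E y \<partial>cpow M k)"
    by (rule nn_integral_multc[OF mE])
  finally show ?case using Suc by (simp add: mult.commute)
qed


primrec cd :: "real \<Rightarrow> nat \<Rightarrow> (real \<Rightarrow> real) \<Rightarrow> real \<Rightarrow> real" where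
  "cd h 0 f x = f x"
| "cd h (Suc m) f x = cd h m f x - cd h m f (x + h)"

lemma cd_deriv:
  assumes cm: "completely_monotone \<phi>" and h: "0 \<le> h"
  shows "\<forall>j x. 0 < x \<longrightarrow> ((\<lambda>y. cd h m ((deriv ^^ j) \<phi>) y) has_real_derivative
            cd h m ((deriv ^^ Suc j) \<phi>) x) (at x)"
proof (induction m)
  case 0
  show ?case
  proof (intro allI impI)
    fix j and x :: real assume x: "0 < x"
    have "((deriv ^^ j) \<phi>) differentiable (at x)" using cm x unfolding completely_monotone_def by blast
    then show "((\<lambda>y. cd h 0 ((deriv ^^ j) \<phi>) y) has_real_derivative cd h 0 ((deriv ^^ Suc j) \<phi>) x) (at x)"
      by (simp add: DERIV_deriv_iff_real_differentiable[symmetric])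
  qed
next
  case (Suc m)
  show ?case
  proof (intro allI impI)
    fix j and x :: real assume x: "0 < x"
    have d1: "((\<lambda>y. cd h m ((deriv ^^ j) \<phi>) y) has_real_derivative cd h m ((deriv ^^ Suc j) \<phi>) x) (at x)"
      using Suc x by blast
    have "((\<lambda>y. cd h m ((deriv ^^ j) \<phi>) y) has_real_derivative cd h m ((deriv ^^ Suc j) \<phi>) (x + h)) (at (x + h))"
      using Suc x h by simp
    then have d2: "((\<lambda>y. cd h m ((deriv ^^ j) \<phi>) (y + h)) has_real_derivative cd h m ((deriv ^^ Suc j) \<phi>) (x + h)) (at x)"
      by (simp add: DERIV_shift)
    show "((\<lambda>y. cd h (Suc m) ((deriv ^^ j) \<phi>) y) has_real_derivative cd h (Suc m) ((deriv ^^ Suc j) \<phi>) x) (at x)"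
      using DERIV_diff[OF d1 d2] by simp
  qed
qed

lemma cd_pos:
  assumes cm: "completely_monotone \<phi>" and h: "0 \<le> h"
  shows "\<forall>j x. 0 < x \<longrightarrow> 0 \<le> (-1) ^ j * cd h m ((deriv ^^ j) \<phi>) x"
proof (induction m)
  case 0
  then show ?case using cm unfolding completely_monotone_def by simp
next
  case (Suc m)
  show ?case
  proof (intro allI impI)
    fix j and x :: real assume x: "0 < x"
    define F where "F y = (-1) ^ j * cd h m ((deriv ^^ j) \<phi>) y" for y
    have "F (x + h) \<le> F x"
    proof (rule DERIV_nonpos_imp_nonincreasing[of x "x + h" F])
      show "x \<le> x + h" using h by simp
      fix y assume y: "x \<le> y" "y \<le> x + h"
      then have y0: "0 < y" using x by simp
      have "((\<lambda>y. cd h m ((deriv ^^ j) \<phi>) y) has_real_derivative cd h m ((deriv ^^ Suc j) \<phi>) y) (at y)"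
        using cd_deriv[OF cm h] y0 by blast
      then have "(F has_real_derivative (-1) ^ j * cd h m ((deriv ^^ Suc j) \<phi>) y) (at y)"
        unfolding F_def by (rule DERIV_cmult)
      moreover have "(-1) ^ j * cd h m ((deriv ^^ Suc j) \<phi>) y \<le> 0"
        using Suc[rule_format, OF y0, of "Suc j"] by simp
      ultimately show "\<exists>d. (F has_real_derivative d) (at y) \<and> d \<le> 0" by blast
    qed
    then show "0 \<le> (-1) ^ j * cd h (Suc m) ((deriv ^^ j) \<phi>) x"
      by (simp add: F_def algebra_simps)
  qed
qed

lemma cd_cont:
  assumes cont: "continuous_on {0..} \<phi>" and h: "0 \<le> h"
  shows "continuous_on {0..} (cd h m \<phi>)"
proof (induction m)
  case 0
  then show ?case using cont by (simp add: cd.simps(1)[abs_def] )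
next
  case (Suc m)
  have "continuous_on {0..} (\<lambda>x. cd h m \<phi> (x + h))"
    by (rule continuous_on_compose2[OF Suc]) (auto intro!: continuous_intros simp: h)
  then show ?case using Suc by (simp add: cd.simps(2)[abs_def] continuous_on_diff)
qed

lemma cd_nonneg:
  assumes cont: "continuous_on {0..} \<phi>" and cm: "completely_monotone \<phi>" and h: "0 \<le> h"
    and x: "0 \<le> x"
  shows "0 \<le> cd h m \<phi> x"
proof (cases "x = 0")
  case False
  then show ?thesis using cd_pos[OF cm h, rule_format, of x 0] x by simp
next
  case True
  have "((cd h m \<phi>) \<longlongrightarrow> cd h m \<phi> 0) (at 0 within {0..})"
    using cd_cont[OF cont h, of m] by (simp add: continuous_on_def)
  then have lim: "((cd h m \<phi>) \<longlongrightarrow> cd h m \<phi> 0) (at_right 0)"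
    by (rule tendsto_within_subset) auto
  have ev: "eventually (\<lambda>y. 0 \<le> cd h m \<phi> y) (at_right 0)"
    unfolding eventually_at_right_field
    using cd_pos[OF cm h, rule_format, of _ 0] by (intro exI[of _ 1]) auto
  show ?thesis using tendsto_lowerbound[OF lim ev trivial_limit_at_right_real] True by simp
qed


definition Lf :: "(nat \<Rightarrow> real) \<Rightarrow> real poly \<Rightarrow> real" where
  "Lf a p = (\<Sum>i\<le>degree p. coeff p i * a i)"

lemma Lf_ext: "degree p \<le> n \<Longrightarrow> Lf a p = (\<Sum>i\<le>n. coeff p i * a i)"
  unfolding Lf_def
  by (rule sum.mono_neutral_right[symmetric]) (auto simp: coeff_eq_0)

lemma Lf_add: "Lf a (p + q) = Lf a p + Lf a q"
proof -
  let ?n = "max (degree p) (degree q)"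
  have "Lf a (p + q) = (\<Sum>i\<le>?n. coeff (p + q) i * a i)"
    by (rule Lf_ext) (meson degree_add_le max.cobounded1 max.cobounded2)
  also have "\<dots> = (\<Sum>i\<le>?n. coeff p i * a i) + (\<Sum>i\<le>?n. coeff q i * a i)"
    by (simp add: sum.distrib algebra_simps)
  also have "\<dots> = Lf a p + Lf a q"
    using Lf_ext[of p ?n a] Lf_ext[of q ?n a] by simp
  finally show ?thesis .
qed

lemma Lf_smult: "Lf a (smult c p) = c * Lf a p"
proof -
  have "Lf a (smult c p) = (\<Sum>i\<le>degree p. coeff (smult c p) i * a i)"
    by (rule Lf_ext) (rule degree_smult_le)
  then show ?thesis by (simp add: Lf_def sum_distrib_left mult.assoc)
qed

lemma Lf_diff: "Lf a (p - q) = Lf a p - Lf a q"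
proof -
  have "p - q = p + smult (-1) q" by simp
  then show ?thesis by (simp only: Lf_add Lf_smult)
qed

lemma Lf_0: "Lf a 0 = 0" by (simp add: Lf_def)

lemma Lf_sum: "Lf a (\<Sum>k\<in>A. f k) = (\<Sum>k\<in>A. Lf a (f k))"
  by (induction A rule: infinite_finite_induct) (simp_all add: Lf_0 Lf_add)

lemma Lf_monom: "Lf a (monom c k) = c * a k"
proof -
  have "Lf a (monom c k) = (\<Sum>i\<le>k. coeff (monom c k) i * a i)"
    by (rule Lf_ext) (simp add: degree_monom_le)
  also have "\<dots> = (\<Sum>i\<le>k. if k = i then c * a k else 0)"
    by (rule sum.cong) (auto simp: coeff_monom)
  finally show ?thesis by simp
qed

lemma monom_step: "monom (1::real) k * [:1,-1:] ^ Suc m = monom 1 k * [:1,-1:] ^ m - monom 1 (Suc k) * [:1,-1:] ^ m"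
  by (rule poly_eq_poly_eq_iff[THEN iffD1], rule ext) (simp add: poly_monom algebra_simps)

lemma Lf_cd: "Lf (\<lambda>i. \<phi> (real i * h)) (monom 1 k * [:1,-1:] ^ m) = cd h m \<phi> (real k * h)"
proof (induction m arbitrary: k)
  case 0
  then show ?case by (simp add: Lf_monom)
next
  case (Suc m)
  show ?case
    unfolding monom_step Lf_diff Suc by (simp add: algebra_simps)
qed

lemma bern_real_id:
  assumes j: "j \<le> N"
  shows "(\<Sum>k\<le>N. real (N choose k) * real (k choose j) * x ^ k * (1 - x) ^ (N - k)) = real (N choose j) * (x::real) ^ j"
proof -
  let ?F = "\<lambda>k. real (N choose k) * real (k choose j) * x ^ k * (1 - x) ^ (N - k)"
  have "(\<Sum>k\<le>N. ?F k) = (\<Sum>k\<in>{j..N}. ?F k)"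
    by (rule sum.mono_neutral_right) auto
  also have "\<dots> = (\<Sum>k\<in>{0 + j..(N - j) + j}. ?F k)" using j by simp
  also have "\<dots> = (\<Sum>i\<in>{0..N - j}. ?F (i + j))"
    by (rule sum.shift_bounds_cl_nat_ivl)
  also have "\<dots> = (\<Sum>i\<le>N - j. real (N choose j) * x ^ j * (real (N - j choose i) * x ^ i * (1 - x) ^ (N - j - i)))"
  proof (rule sum.cong)
    fix i assume i: "i \<in> {..N - j}"
    have "(N choose (i + j)) * ((i + j) choose j) = (N choose j) * ((N - j) choose i)"
      using choose_mult[of j "i + j" N] i j by simp
    then have "real (N choose (i + j)) * real ((i + j) choose j) = real (N choose j) * real ((N - j) choose i)"
      by (metis of_nat_mult)
    moreover have "N - (i + j) = N - j - i" by simp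
    ultimately show "?F (i + j) = real (N choose j) * x ^ j * (real (N - j choose i) * x ^ i * (1 - x) ^ (N - j - i))"
      by (simp add: power_add algebra_simps)
  qed (simp add: atLeast0AtMost)
  also have "\<dots> = real (N choose j) * x ^ j * (x + (1 - x)) ^ (N - j)"
    by (subst binomial_ring) (simp add: sum_distrib_left)
  also have "\<dots> = real (N choose j) * x ^ j" by simp
  finally show ?thesis .
qed

lemma bern_real_id':
  assumes j: "j \<le> N"
  shows "(\<Sum>k\<le>N. real (N choose k) * (real (k choose j) * (x ^ k * (1 - x) ^ (N - k)))) = real (N choose j) * (x::real) ^ j"
  using bern_real_id[OF j, of x] by (simp add: mult.assoc)

lemma hausdorff_id:
  assumes j: "j \<le> N"
  shows "(\<Sum>k\<le>N. real (N choose k) * real (k choose j) * cd h (N - k) \<phi> (real k * h)) = real (N choose j) * \<phi> (real j * h)"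
proof -
  let ?a = "\<lambda>i. \<phi> (real i * h)"
  have pe: "(\<Sum>k\<le>N. smult (real (N choose k) * real (k choose j)) (monom 1 k * [:1,-1:] ^ (N - k)))
      = smult (real (N choose j)) (monom 1 j)"
    by (rule poly_eq_poly_eq_iff[THEN iffD1], rule ext)
      (use bern_real_id[OF j] in \<open>simp add: poly_sum poly_monom mult.assoc\<close>)
  have "Lf ?a (\<Sum>k\<le>N. smult (real (N choose k) * real (k choose j)) (monom 1 k * [:1,-1:] ^ (N - k)))
      = (\<Sum>k\<le>N. real (N choose k) * real (k choose j) * cd h (N - k) \<phi> (real k * h))"
    by (simp add: Lf_sum Lf_smult Lf_cd)
  moreover have "Lf ?a (smult (real (N choose j)) (monom 1 j)) = real (N choose j) * \<phi> (real j * h)"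
    by (simp add: Lf_smult Lf_monom)
  ultimately show ?thesis using pe by simp
qed


lemma choose_rec: "real (Suc j) * real (k choose Suc j) = real (k - j) * real (k choose j)"
proof -
  have "Suc j * (k choose Suc j) = k * ((k - 1) choose j)" by (rule binomial_absorption)
  also have "\<dots> = (k - j) * (k choose j)" by (rule binomial_absorb_comp[symmetric])
  finally show ?thesis by (metis of_nat_mult)
qed

lemma frac_aux: "(e::real) \<noteq> 0 \<Longrightarrow> (a * c / e) / (b * d / e) = c / d * (a / b)"
  by (cases "b = 0"; cases "d = 0") (simp_all add: field_simps)

lemma ratio_bound:
  assumes k: "k \<le> N" and N: "0 < N"
  shows "j \<le> N \<Longrightarrow> (real k / N) ^ j - real j ^ 2 / N \<le> real (k choose j) / real (N choose j)
          \<and> real (k choose j) / real (N choose j) \<le> (real k / N) ^ j"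
proof (induction j)
  case 0
  then show ?case using N by simp
next
  case (Suc j)
  have jN: "j < N" using Suc.prems by simp
  define r where "r = real (k choose j) / real (N choose j)"
  have IH: "(real k / N) ^ j - real j ^ 2 / N \<le> r" "r \<le> (real k / N) ^ j"
    using Suc.IH jN by (auto simp: r_def)
  have r0: "0 \<le> r" by (simp add: r_def)
  have kN1: "real k / N \<le> 1" "0 \<le> real k / N" using k N by auto
  have r1: "r \<le> 1" using IH(2) power_le_one[OF kN1(2) kN1(1), where n=j] by linarith
  have CN: "0 < real (N choose j)" using jN by simp
  define q where "q = real (k - j) / real (N - j)"
  have Nj: "0 < real (N - j)" using jN by simp
  have step: "real (k choose Suc j) / real (N choose Suc j) = r * q"
  proof -
    have a: "real (k choose Suc j) = real (k - j) * real (k choose j) / real (Suc j)"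
      using choose_rec[of j k] by (simp add: field_simps)
    have b: "real (N choose Suc j) = real (N - j) * real (N choose j) / real (Suc j)"
      using choose_rec[of j N] by (simp add: field_simps)
    show ?thesis unfolding a b r_def q_def by (rule frac_aux) simp
  qed
  have q0: "0 \<le> q" by (simp add: q_def)
  have qup: "q \<le> real k / N"
  proof (cases "j \<le> k")
    case True
    then have e: "real (k - j) = real k - real j" "real (N - j) = real N - real j" using jN by auto
    have p: "(real k - real j) * N \<le> real k * (real N - real j)"
      using mult_left_mono[of "real k" "real N" "real j"] k by (simp add: algebra_simps)
    have Nj': "0 < real N - real j" using jN by simp
    show ?thesis unfolding q_def e using p Nj' N by (simp add: divide_le_eq le_divide_eq mult.commute)
  next
    case False
    then show ?thesis by (simp add: q_def)
  qed
  have qlow: "real k / N - real j / N \<le> q"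
  proof (cases "j \<le> k")
    case True
    then have e: "real (k - j) = real k - real j" "real (N - j) = real N - real j" using jN by auto
    have "(real k - real j) / N \<le> (real k - real j) / (real N - real j)"
      using True jN N by (intro divide_left_mono) auto
    then show ?thesis unfolding q_def e by (simp add: diff_divide_distrib)
  next
    case False
    have "real k - real j \<le> 0" using False by simp
    then have "(real k - real j) / N \<le> 0" using N by (simp add: divide_nonpos_pos)
    then show ?thesis using q0 by (simp add: diff_divide_distrib)
  qed
  have up: "r * q \<le> (real k / N) ^ Suc j"
    using mult_mono[OF IH(2) qup zero_le_power[OF kN1(2)] q0] by (simp only: power_Suc2)
  have low: "(real k / N) ^ Suc j - real (Suc j) ^ 2 / N \<le> r * q"
  proof -
    let ?x = "real k / N"
    have "r * q \<ge> r * (?x - real j / N)" using mult_left_mono[OF qlow r0] .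
    moreover have "r * ?x \<ge> ((?x) ^ j - real j ^ 2 / N) * ?x" using mult_right_mono[OF IH(1) kN1(2)] .
    moreover have "r * (real j / N) \<le> real j / N"
      using mult_right_mono[OF r1, of "real j / N"] by simp
    moreover have "real j ^ 2 / N * ?x \<le> real j ^ 2 / N"
      using mult_left_mono[OF kN1(1), of "real j ^ 2 / N"] by simp
    moreover have "real j ^ 2 / N + real j / N \<le> real (Suc j) ^ 2 / N"
      using N by (simp add: field_simps power2_eq_square)
    moreover have "r * (?x - real j / N) = r * ?x - r * (real j / N)" by (rule right_diff_distrib)
    moreover have "((?x) ^ j - real j ^ 2 / N) * ?x = ?x ^ Suc j - real j ^ 2 / N * ?x"
      by (simp only: left_diff_distrib power_Suc2)
    ultimately show ?thesis by linarith
  qed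
  show ?case using up low step by simp
qed

lemma moment_est:
  fixes W :: "nat \<Rightarrow> real"
  assumes W0: "\<And>k. 0 \<le> W k" and W1: "(\<Sum>k\<le>N. W k) = 1"
    and id: "(\<Sum>k\<le>N. real (N choose k) * real (k choose j) * c k) = real (N choose j) * A"
    and Wdef: "\<And>k. W k = real (N choose k) * c k"
    and j: "j \<le> N" and N: "0 < N"
  shows "\<bar>(\<Sum>k\<le>N. W k * (real k / N) ^ j) - A\<bar> \<le> real j ^ 2 / N"
proof -
  have CN: "0 < real (N choose j)" using j by simp
  have A: "A = (\<Sum>k\<le>N. W k * (real (k choose j) / real (N choose j)))"
  proof -
    have "(\<Sum>k\<le>N. W k * (real (k choose j) / real (N choose j))) =
        (\<Sum>k\<le>N. real (N choose k) * real (k choose j) * c k) / real (N choose j)"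
      by (simp add: Wdef sum_divide_distrib algebra_simps)
    then show ?thesis using id CN by simp
  qed
  have d: "(\<Sum>k\<le>N. W k * (real k / N) ^ j) - A = (\<Sum>k\<le>N. W k * ((real k / N) ^ j - real (k choose j) / real (N choose j)))"
    unfolding A by (simp add: sum_subtractf algebra_simps)
  have lo: "0 \<le> (\<Sum>k\<le>N. W k * ((real k / N) ^ j - real (k choose j) / real (N choose j)))"
    using ratio_bound[OF _ N j] W0 by (intro sum_nonneg mult_nonneg_nonneg) auto
  have "(\<Sum>k\<le>N. W k * ((real k / N) ^ j - real (k choose j) / real (N choose j))) \<le> (\<Sum>k\<le>N. W k * (real j ^ 2 / N))"
    using ratio_bound[OF _ N j] W0 by (intro sum_mono mult_left_mono) (auto simp: algebra_simps)
  also have "\<dots> = (\<Sum>k\<le>N. W k) * (real j ^ 2 / N)" by (rule sum_distrib_right[symmetric])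
  also have "\<dots> = real j ^ 2 / N" using W1 by simp
  finally show ?thesis using d lo by simp
qed


definition clp :: "real \<Rightarrow> real" where "clp x = max 0 (min 1 x)"
definition tf :: "nat \<Rightarrow> nat \<Rightarrow> real \<Rightarrow> real" where "tf m j x = (root (2^m) (clp x)) ^ j"

lemma clp_bounds: "0 \<le> clp x" "clp x \<le> 1" by (auto simp: clp_def)

lemma clp_id: "0 \<le> x \<Longrightarrow> x \<le> 1 \<Longrightarrow> clp x = x" by (simp add: clp_def)

lemma isCont_clp: "isCont clp x"
  unfolding clp_def by (intro continuous_intros)

lemma tf_cont: "isCont (tf m j) x"
proof -
  have "isCont (\<lambda>x. root (2^m) (clp x)) x" by (rule isCont_o2[OF isCont_clp isCont_real_root])
  then show ?thesis unfolding tf_def by (rule isCont_power)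
qed

lemma tf_bound: "norm (tf m j x) \<le> 1"
proof -
  have "0 \<le> root (2^m) (clp x)" "root (2^m) (clp x) \<le> 1"
    using clp_bounds[of x] by (auto simp: real_root_le_1_iff)
  then show ?thesis unfolding tf_def by (simp add: power_le_one abs_le_iff)
qed

lemma tf_meas[measurable]: "tf m j \<in> borel_measurable borel"
  by (rule borel_measurable_continuous_onI) (simp add: continuous_at_imp_continuous_on tf_cont)

lemma pow_bound_aux:
  fixes j m n :: nat
  assumes "m \<le> n"
  shows "real (j * 2 ^ (n - m)) ^ 2 / real ((8::nat) ^ n) \<le> real j ^ 2 / 2 ^ n"
proof -
  have a: "real (2 ^ (n - m) :: nat) \<le> 2 ^ n" by simp
  have "real (j * 2 ^ (n - m)) ^ 2 = real j ^ 2 * (real (2 ^ (n - m) :: nat)) ^ 2"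
    by (simp add: power_mult_distrib)
  also have "\<dots> \<le> real j ^ 2 * (2 ^ n) ^ 2"
    by (intro mult_left_mono power_mono) (simp_all add: a)
  finally have b: "real (j * 2 ^ (n - m)) ^ 2 \<le> real j ^ 2 * (2 ^ n) ^ 2" .
  have c: "real ((8::nat) ^ n) = (2 ^ n) ^ 2 * 2 ^ n"
  proof -
    have "(2::real) ^ n * 2 ^ n * 2 ^ n = (2 * 2 * 2) ^ n" by (simp only: power_mult_distrib)
    then show ?thesis by (simp add: power2_eq_square)
  qed
  have "real (j * 2 ^ (n - m)) ^ 2 / real ((8::nat) ^ n) \<le> real j ^ 2 * (2 ^ n) ^ 2 / ((2 ^ n) ^ 2 * 2 ^ n)"
    unfolding c by (rule divide_right_mono[OF b]) simp
  also have "\<dots> = real j ^ 2 / 2 ^ n" by simp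
  finally show ?thesis .
qed

lemma approx_seq:
  fixes \<phi> :: "real \<Rightarrow> real"
  assumes cont: "continuous_on {0..} \<phi>" and cm: "completely_monotone \<phi>" and p0: "\<phi> 0 = 1"
  shows "\<exists>\<sigma>. (\<forall>n. real_distribution (\<sigma> n)) \<and> (\<forall>n. measure (\<sigma> n) {-1<..1} = 1) \<and>
     (\<forall>m j. (\<lambda>n. \<integral>x. tf m j x \<partial>\<sigma> n) \<longlonglongrightarrow> \<phi> (real j / 2 ^ m))"
proof -
  define hn :: "nat \<Rightarrow> real" where "hn n = 1 / 2 ^ n" for n :: nat
  define Nn where "Nn n = (8::nat) ^ n" for n :: nat
  have hn0: "0 \<le> hn n" for n by (simp add: hn_def)
  have Nn0: "0 < Nn n" for n by (simp add: Nn_def)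
  define W where "W n k = real (Nn n choose k) * cd (hn n) (Nn n - k) \<phi> (real k * hn n)" for n k
  have W0: "0 \<le> W n k" for n k
    unfolding W_def by (intro mult_nonneg_nonneg cd_nonneg[OF cont cm hn0]) (simp_all add: hn0)
  have W1: "(\<Sum>k\<le>Nn n. W n k) = 1" for n
    using hausdorff_id[of 0 "Nn n" "hn n" \<phi>] p0 by (simp add: W_def)
  define pw where "pw n k = (if k \<le> Nn n then W n k else 0)" for n k
  have pw0: "0 \<le> pw n k" for n k by (simp add: pw_def W0)
  have pw1: "(\<integral>\<^sup>+ k. ennreal (pw n k) \<partial>count_space UNIV) = 1" for n
  proof -
    have "(\<integral>\<^sup>+ k. ennreal (pw n k) \<partial>count_space UNIV) = (\<Sum>k\<le>Nn n. ennreal (pw n k))"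
      by (rule nn_integral_count_space') (auto simp: pw_def)
    also have "\<dots> = ennreal (\<Sum>k\<le>Nn n. pw n k)" by (rule sum_ennreal) (simp add: pw0)
    also have "(\<Sum>k\<le>Nn n. pw n k) = 1" using W1[of n] by (simp add: pw_def)
    finally show ?thesis by simp
  qed
  define P where "P n = embed_pmf (pw n)" for n
  have pmfP: "pmf (P n) k = pw n k" for n k
    unfolding P_def by (rule pmf_embed_pmf[OF pw0 pw1])
  define y where "y n k = (min 1 (real k / Nn n)) ^ (2 ^ n)" for n k
  have y01: "0 \<le> y n k" "y n k \<le> 1" for n k
    by (auto simp: y_def power_le_one)
  define \<sigma> where "\<sigma> n = distr (measure_pmf (P n)) borel (y n)" for n
  have ymeas: "y n \<in> measurable (measure_pmf (P n)) borel" for n by simp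
  have RD: "real_distribution (\<sigma> n)" for n
  proof -
    show ?thesis unfolding real_distribution_def real_distribution_axioms_def
      by (auto simp: \<sigma>_def intro!: measure_pmf.prob_space_distr)
  qed
  have supp: "measure (\<sigma> n) {-1<..1} = 1" for n
  proof -
    have "measure (\<sigma> n) {-1<..1} = measure (measure_pmf (P n)) (y n -` {-1<..1} \<inter> space (measure_pmf (P n)))"
      unfolding \<sigma>_def by (rule measure_distr) simp_all
    also have "y n -` {-1<..1} \<inter> space (measure_pmf (P n)) = UNIV"
    proof -
      have "y n k \<in> {-1<..1}" for k using y01[of n k] by auto
      then show ?thesis by auto
    qed
    finally show ?thesis by simp
  qed
  have intg: "(\<integral>x. f x \<partial>\<sigma> n) = (\<Sum>k\<le>Nn n. f (y n k) * W n k)" if mf: "f \<in> borel_measurable borel" for f n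
  proof -
    have "(\<integral>x. f x \<partial>\<sigma> n) = (\<integral>k. f (y n k) \<partial>measure_pmf (P n))"
      unfolding \<sigma>_def by (rule integral_distr) (simp_all add: mf)
    also have "\<dots> = (\<Sum>k\<le>Nn n. f (y n k) * pmf (P n) k)"
      by (rule integral_measure_pmf_real) (auto simp: set_pmf_iff pmfP pw_def split: if_splits)
    also have "\<dots> = (\<Sum>k\<le>Nn n. f (y n k) * W n k)"
      by (rule sum.cong) (simp_all add: pmfP pw_def)
    finally show ?thesis .
  qed
  have conv: "(\<lambda>n. \<integral>x. tf m j x \<partial>\<sigma> n) \<longlonglongrightarrow> \<phi> (real j / 2 ^ m)" for m j
  proof (rule LIM_zero_cancel, rule Lim_null_comparison)
    show "(\<lambda>n. real j ^ 2 / 2 ^ n) \<longlonglongrightarrow> 0" by (rule LIMSEQ_divide_realpow_zero) simp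
    show "\<forall>\<^sub>F n in sequentially. norm ((\<integral>x. tf m j x \<partial>\<sigma> n) - \<phi> (real j / 2 ^ m)) \<le> real j ^ 2 / 2 ^ n"
    proof (rule eventually_sequentiallyI[of "max m j"])
      fix n assume n: "max m j \<le> n"
      define J where "J = j * 2 ^ (n - m)"
      have JN: "J \<le> Nn n"
      proof -
        have "j \<le> 4 ^ n"
        proof -
          have "j \<le> n" using n by simp
          also have "n < 2 ^ n" by (rule less_exp)
          also have "(2::nat) ^ n \<le> 4 ^ n" by (rule power_mono) simp_all
          finally show ?thesis by simp
        qed
        moreover have "(2::nat) ^ (n - m) \<le> 2 ^ n" by simp
        ultimately have "J \<le> 4 ^ n * 2 ^ n" unfolding J_def by (intro mult_mono) simp_all
        also have "(4::nat) ^ n * 2 ^ n = 8 ^ n" by (simp add: power_mult_distrib[symmetric])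
        finally show ?thesis by (simp add: Nn_def)
      qed
      have tfy: "tf m j (y n k) = (real k / Nn n) ^ J" if k: "k \<le> Nn n" for k
      proof -
        have kN: "real k / Nn n \<le> 1" "0 \<le> real k / Nn n" using k Nn0[of n] by auto
        then have yk: "y n k = (real k / Nn n) ^ 2 ^ n" by (simp add: y_def)
        have "clp (y n k) = y n k" using y01 by (simp add: clp_id)
        moreover have "y n k = ((real k / Nn n) ^ (2 ^ (n - m))) ^ (2 ^ m)"
          using n by (simp add: yk power_mult[symmetric] power_add[symmetric])
        ultimately have "root (2 ^ m) (clp (y n k)) = (real k / Nn n) ^ (2 ^ (n - m))"
          using kN by (simp add: real_root_pos2)
        then show ?thesis unfolding tf_def J_def by (simp add: power_mult[symmetric] mult.commute)
      qed
      have "(\<integral>x. tf m j x \<partial>\<sigma> n) = (\<Sum>k\<le>Nn n. W n k * (real k / Nn n) ^ J)"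
        by (simp add: intg tfy mult.commute)
      moreover have "\<phi> (real J * hn n) = \<phi> (real j / 2 ^ m)"
      proof -
        have "real J * hn n = real j * 2 ^ (n - m) / 2 ^ n" by (simp add: J_def hn_def)
        also have "\<dots> = real j / 2 ^ m"
          using n by (simp add: power_diff field_simps)
        finally show ?thesis by simp
      qed
      moreover have "\<bar>(\<Sum>k\<le>Nn n. W n k * (real k / Nn n) ^ J) - \<phi> (real J * hn n)\<bar> \<le> real J ^ 2 / Nn n"
        by (rule moment_est[OF W0 W1 hausdorff_id[OF JN] _ JN Nn0]) (simp add: W_def)
      moreover have "real J ^ 2 / Nn n \<le> real j ^ 2 / 2 ^ n"
        unfolding J_def Nn_def using pow_bound_aux[of m n j] n by simp
      ultimately show "norm ((\<integral>x. tf m j x \<partial>\<sigma> n) - \<phi> (real j / 2 ^ m)) \<le> real j ^ 2 / 2 ^ n"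
        by simp
    qed
  qed
  show ?thesis using RD supp conv by blast
qed


lemma clp_meas[measurable]: "clp \<in> borel_measurable borel"
  by (rule borel_measurable_continuous_onI) (simp add: continuous_at_imp_continuous_on isCont_clp)

lemma ln_clp_le: "ln (clp x) \<le> 0"
proof (cases "clp x = 0")
  case True then show ?thesis by simp
next
  case False
  then have "0 < clp x" using clp_bounds[of x] by simp
  then show ?thesis using clp_bounds[of x] by simp
qed

lemma F_bound: "0 \<le> t \<Longrightarrow> norm (exp (t * ln (clp x))) \<le> 1"
  using ln_clp_le[of x] by (simp add: mult_nonneg_nonpos)

lemma bernstein:
  fixes \<phi> :: "real \<Rightarrow> real"
  assumes cont: "continuous_on {0..} \<phi>" and cm: "completely_monotone \<phi>" and p0: "\<phi> 0 = 1"
  shows "\<exists>\<rho>::real measure. prob_space \<rho> \<and> sets \<rho> = sets borel \<and> (AE s in \<rho>. 0 \<le> s) \<and>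
           (\<forall>t\<ge>0. ennreal (\<phi> t) = (\<integral>\<^sup>+ s. ennreal (exp (- t * s)) \<partial>\<rho>))"
proof -
  obtain \<sigma> where RD: "\<And>n. real_distribution (\<sigma> n)" and supp: "\<And>n. measure (\<sigma> n) {-1<..1} = 1"
    and conv: "\<And>m j. (\<lambda>n. \<integral>x. tf m j x \<partial>\<sigma> n) \<longlonglongrightarrow> \<phi> (real j / 2 ^ m)"
    using approx_seq[OF cont cm p0] by blast
  have "tight \<sigma>"
    unfolding tight_def
  proof (intro conjI allI impI)
    show "real_distribution (\<sigma> n)" for n by (rule RD)
    fix \<epsilon> :: real assume "0 < \<epsilon>"
    then show "\<exists>a b. a < b \<and> (\<forall>n. 1 - \<epsilon> < measure (\<sigma> n) {a<..b})"
      by (intro exI[of _ "-1"] exI[of _ 1]) (simp add: supp)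
  qed
  from tight_imp_convergent_subsubsequence[OF this strict_mono_id] obtain r M
    where r: "strict_mono r" and RDM: "real_distribution M" and wc: "weak_conv_m (\<sigma> \<circ> id \<circ> r) M"
    by blast
  interpret M: real_distribution M by (rule RDM)
  have D: "(\<integral>x. tf m j x \<partial>M) = \<phi> (real j / 2 ^ m)" for m j
  proof -
    have "(\<lambda>n. \<integral>x. tf m j x \<partial>(\<sigma> \<circ> id \<circ> r) n) \<longlonglongrightarrow> (\<integral>x. tf m j x \<partial>M)"
      by (rule weak_conv_imp_integral_bdd_continuous_conv[OF _ RDM wc tf_cont tf_bound]) (simp add: RD)
    moreover have "(\<lambda>n. \<integral>x. tf m j x \<partial>(\<sigma> \<circ> id \<circ> r) n) \<longlonglongrightarrow> \<phi> (real j / 2 ^ m)"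
      using LIMSEQ_subseq_LIMSEQ[OF conv r] by (simp add: comp_def)
    ultimately show ?thesis by (rule LIMSEQ_unique)
  qed
  have pos: "AE x in M. 0 < clp x"
  proof -
    have lim1: "(\<lambda>m. \<integral>x. tf m 1 x \<partial>M) \<longlonglongrightarrow> (\<integral>x. indicator {x. 0 < clp x} x \<partial>M)"
    proof (rule integral_dominated_convergence[where w="\<lambda>x. 1"])
      show "indicat_real {x. 0 < clp x} \<in> borel_measurable M"
        by (subst measurable_cong_sets[OF M.events_eq_borel refl]) measurable
      show "tf m 1 \<in> borel_measurable M" for m
        by (subst measurable_cong_sets[OF M.events_eq_borel refl]) measurable
      show "integrable M (\<lambda>x. 1)" by simp
      show "AE x in M. norm (tf m 1 x) \<le> 1" for m using tf_bound by simp
      show "AE x in M. (\<lambda>m. tf m 1 x) \<longlonglongrightarrow> indicator {x. 0 < clp x} x"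
      proof (rule AE_I2)
        fix x
        show "(\<lambda>m. tf m 1 x) \<longlonglongrightarrow> indicator {x. 0 < clp x} x"
        proof (cases "0 < clp x")
          case True
          have sm: "strict_mono (\<lambda>m::nat. (2::nat) ^ m)"
            by (rule strict_monoI) simp
          have "(\<lambda>m. root ((2::nat) ^ m) (clp x)) \<longlonglongrightarrow> 1"
            using LIMSEQ_subseq_LIMSEQ[OF LIMSEQ_root_const[OF True] sm] by (simp add: comp_def)
          then show ?thesis using True by (simp add: tf_def)
        next
          case False
          then have "clp x = 0" using clp_bounds[of x] by simp
          then show ?thesis by (simp add: tf_def)
        qed
      qed
    qed
    have lim2: "(\<lambda>m. \<integral>x. tf m 1 x \<partial>M) \<longlonglongrightarrow> 1"
    proof -
      have "(\<lambda>m. 1 / (2::real) ^ m) \<longlonglongrightarrow> 0" by (rule LIMSEQ_divide_realpow_zero) simp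
      then have "(\<lambda>m. \<phi> (1 / 2 ^ m)) \<longlonglongrightarrow> \<phi> 0"
        by (rule continuous_on_tendsto_compose[OF cont]) auto
      then show ?thesis using D[of _ 1] p0 by simp
    qed
    have "measure M {x. 0 < clp x} = 1"
      using LIMSEQ_unique[OF lim1 lim2] by (simp add: integral_indicator)
    from M.AE_prob_1[OF this] show ?thesis by simp
  qed
  define F where "F t x = exp (t * ln (clp x))" for t x
  have Fmeas: "F t \<in> borel_measurable M" for t
    unfolding F_def by (subst measurable_cong_sets[OF M.events_eq_borel refl]) measurable
  have Fint: "0 \<le> t \<Longrightarrow> integrable M (F t)" for t
    by (rule M.integrable_const_bound[where B=1])
      (simp_all add: F_def Fmeas mult_nonneg_nonpos ln_clp_le)
  have FD: "(\<integral>x. F (real j / 2 ^ m) x \<partial>M) = \<phi> (real j / 2 ^ m)" for m j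
  proof -
    have "(\<integral>x. F (real j / 2 ^ m) x \<partial>M) = (\<integral>x. tf m j x \<partial>M)"
    proof (rule integral_cong_AE)
      show "F (real j / 2 ^ m) \<in> borel_measurable M" by (rule Fmeas)
      show "tf m j \<in> borel_measurable M"
        by (subst measurable_cong_sets[OF M.events_eq_borel refl]) measurable
      show "AE x in M. F (real j / 2 ^ m) x = tf m j x"
        using pos
      proof eventually_elim
        case (elim x)
        have "root (2 ^ m) (clp x) = exp (ln (clp x) / 2 ^ m)"
          using elim by (simp add: root_powr_inverse powr_def)
        then have "tf m j x = exp (ln (clp x) / 2 ^ m) ^ j" by (simp add: tf_def)
        also have "\<dots> = exp (real j * (ln (clp x) / 2 ^ m))" by (simp only: exp_of_nat_mult)
        finally show ?case by (simp add: F_def)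
      qed
    qed
    then show ?thesis using D by simp
  qed
  have FT: "(\<integral>x. F t x \<partial>M) = \<phi> t" if t: "0 \<le> t" for t
  proof -
    define tn where "tn n = real (nat \<lfloor>t * 2 ^ n\<rfloor>) / 2 ^ n" for n :: nat
    have tn0: "0 \<le> tn n" for n by (simp add: tn_def)
    have tnlim: "tn \<longlonglongrightarrow> t"
    proof (rule LIM_zero_cancel, rule Lim_null_comparison)
      show "(\<lambda>n. 1 / (2::real) ^ n) \<longlonglongrightarrow> 0" by (rule LIMSEQ_divide_realpow_zero) simp
      show "\<forall>\<^sub>F n in sequentially. norm (tn n - t) \<le> 1 / 2 ^ n"
      proof (rule always_eventually, rule allI)
        fix n
        have fl: "0 \<le> \<lfloor>t * 2 ^ n\<rfloor>" using t by simp
        have e: "real (nat \<lfloor>t * 2 ^ n\<rfloor>) = real_of_int \<lfloor>t * 2 ^ n\<rfloor>" using fl by simp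
        have "t * 2 ^ n - 1 \<le> real_of_int \<lfloor>t * 2 ^ n\<rfloor>" "real_of_int \<lfloor>t * 2 ^ n\<rfloor> \<le> t * 2 ^ n"
          by linarith+
        note fb = this
        have p: "0 < (2::real) ^ n" by simp
        have a1: "t - 1 / 2 ^ n = (t * 2 ^ n - 1) / 2 ^ n" using p by (simp add: diff_divide_distrib)
        have a2: "t = (t * 2 ^ n) / 2 ^ n" using p by simp
        have "t - 1 / 2 ^ n \<le> tn n"
          unfolding tn_def e a1 by (rule divide_right_mono[OF fb(1)]) simp
        moreover have "tn n \<le> t"
          unfolding tn_def e by (subst a2) (rule divide_right_mono[OF fb(2)], simp)
        ultimately have "t - 1 / 2 ^ n \<le> tn n" "tn n \<le> t" by auto
        then show "norm (tn n - t) \<le> 1 / 2 ^ n" by simp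
      qed
    qed
    have l1: "(\<lambda>n. \<integral>x. F (tn n) x \<partial>M) \<longlonglongrightarrow> (\<integral>x. F t x \<partial>M)"
    proof (rule integral_dominated_convergence[where w="\<lambda>x. 1"])
      show "F t \<in> borel_measurable M" "F (tn n) \<in> borel_measurable M" for n by (rule Fmeas)+
      show "integrable M (\<lambda>x. 1)" by simp
      show "AE x in M. norm (F (tn n) x) \<le> 1" for n
        by (rule AE_I2) (simp add: F_def mult_nonneg_nonpos[OF tn0 ln_clp_le])
      show "AE x in M. (\<lambda>n. F (tn n) x) \<longlonglongrightarrow> F t x"
        unfolding F_def by (intro AE_I2 tendsto_intros tnlim)
    qed
    have l2: "(\<lambda>n. \<integral>x. F (tn n) x \<partial>M) \<longlonglongrightarrow> \<phi> t"
    proof -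
      have "(\<lambda>n. \<phi> (tn n)) \<longlonglongrightarrow> \<phi> t"
        by (rule continuous_on_tendsto_compose[OF cont tnlim]) (simp_all add: t tn0)
      then show ?thesis unfolding tn_def using FD by simp
    qed
    show ?thesis using LIMSEQ_unique[OF l1 l2] .
  qed
  define h where "h x = - ln (clp x)" for x
  have hmeas: "h \<in> measurable M borel"
    unfolding h_def by (subst measurable_cong_sets[OF M.events_eq_borel refl]) measurable
  define \<rho> where "\<rho> = distr M borel h"
  show ?thesis
  proof (intro exI[of _ \<rho>] conjI allI impI)
    show "prob_space \<rho>" unfolding \<rho>_def by (rule M.prob_space_distr[OF hmeas])
    show "sets \<rho> = sets borel" by (simp add: \<rho>_def)
    show "AE s in \<rho>. 0 \<le> s"
      unfolding \<rho>_def by (subst AE_distr_iff[OF hmeas]) (simp_all add: h_def ln_clp_le)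
    fix t :: real assume t: "0 \<le> t"
    have "(\<integral>\<^sup>+ s. ennreal (exp (- t * s)) \<partial>\<rho>) = (\<integral>\<^sup>+ x. ennreal (exp (- t * h x)) \<partial>M)"
      unfolding \<rho>_def by (rule nn_integral_distr[OF hmeas]) simp
    also have "\<dots> = (\<integral>\<^sup>+ x. ennreal (F t x) \<partial>M)"
      by (simp add: h_def F_def)
    also have "\<dots> = ennreal (\<integral>x. F t x \<partial>M)"
      by (rule nn_integral_eq_integral[OF Fint[OF t]]) (simp add: F_def)
    finally show "ennreal (\<phi> t) = (\<integral>\<^sup>+ s. ennreal (exp (- t * s)) \<partial>\<rho>)" using FT[OF t] by simp
  qed
qed


lemma pow_fact_le_exp: "0 \<le> (s::real) \<Longrightarrow> s ^ k / fact k \<le> exp s"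
proof -
  assume s: "0 \<le> s"
  have sm: "summable (\<lambda>n. s ^ n /\<^sub>R fact n)" using exp_converges sums_summable by blast
  have "sum (\<lambda>n. s ^ n /\<^sub>R fact n) {k} \<le> suminf (\<lambda>n. s ^ n /\<^sub>R fact n)"
    by (rule sum_le_suminf[OF sm]) (auto simp: s)
  moreover have "(\<Sum>n. s ^ n /\<^sub>R fact n) = exp s" using exp_converges[of s] sums_unique by metis
  ultimately have "s ^ k /\<^sub>R fact k \<le> exp s" by simp
  then show ?thesis by (simp add: divide_inverse mult.commute)
qed

lemma etr_scale: "etr (- ((T::real^'n^'n) ** (s *\<^sub>R B + Y))) = exp (- (s * trace (T ** B))) * etr (- (T ** Y))"
  unfolding etr_add by (simp add: etr_neg mat_mult_scaleR_right trace_scaleR etr_def trace_def sum_negf sum_distrib_left)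

lemma assembly:
  fixes g :: "real^'p^'p \<Rightarrow> real"
    and B :: "real^'p^'p"
    and \<mu> :: "(real^'p^'p) measure"
    and \<phi> :: "real \<Rightarrow> real"
    and \<rho> :: "real measure"
  assumes bern: "mv_bernstein g 0 B \<mu>"
    and P: "prob_space \<mu>"
    and phinn: "\<forall>x\<ge>0. 0 \<le> \<phi> x"
    and rhoP: "prob_space \<rho>" and rhoS: "sets \<rho> = sets borel" and rhoA: "AE s in \<rho>. 0 \<le> s"
    and rep: "\<forall>t\<ge>0. ennreal (\<phi> t) = (\<integral>\<^sup>+ s. ennreal (exp (- t * s)) \<partial>\<rho>)"
  shows "mv_completely_monotone (\<phi> \<circ> g)"
proof -
  have BS: "B \<in> Spsd" and Smu: "sets \<mu> = sets (restrict_space borel Spd)"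
    and gdef: "\<And>T. T \<in> Spd \<Longrightarrow> 0 \<le> g T \<and> g T = trace (0::real^'p^'p) + trace (B ** T) + (\<integral> X. (1 - etr (- (T ** X))) \<partial>\<mu>)"
    using bern unfolding mv_bernstein_def by auto
  have Spd_Spsd: "Spd \<subseteq> (Spsd :: (real^'p^'p) set)"
    by (auto simp: Spd_def Spsd_def) (metis inner_zero_left less_eq_real_def)
  have spmu: "space \<mu> = Spd"
    using sets_eq_imp_space_eq[OF Smu] by (simp add: space_restrict_space)
  have idm: "(\<lambda>x. x) \<in> measurable \<mu> (borel :: (real^'p^'p) measure)"
    by (subst measurable_cong_sets[OF Smu refl]) (rule measurable_restrict_space1, simp)
  interpret mu: prob_space \<mu> by (rule P)
  define \<mu>0 where "\<mu>0 = distr \<mu> borel (\<lambda>x. x)"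
  have P0: "prob_space \<mu>0" unfolding \<mu>0_def by (rule mu.prob_space_distr[OF idm])
  have S0: "sets \<mu>0 = sets borel" unfolding \<mu>0_def by simp
  have A0: "AE x in \<mu>0. x \<in> Spsd"
    unfolding \<mu>0_def by (subst AE_distr_iff[OF idm]) (auto intro!: AE_I2 simp: spmu dest: subsetD[OF Spd_Spsd])
  define C where "C = cpow \<mu>0"
  have CP: "\<And>k. prob_space (C k)" and CS: "\<And>k. sets (C k) = sets borel"
    and CA: "\<And>k. AE x in C k. x \<in> Spsd"
    using cpow_props[OF P0 S0 A0] unfolding C_def by auto
  define w where "w k s = exp (- s) * s ^ k / fact k" for k :: nat and s :: real
  define D where "D k = density \<rho> (\<lambda>s. ennreal (w k s))" for k
  have DS: "sets (D k) = sets borel" for k by (simp add: D_def rhoS)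
  define \<nu> where "\<nu> k = distr (D k \<Otimes>\<^sub>M C k) borel (\<lambda>(s,Y). s *\<^sub>R B + Y)" for k
  have meas_map: "(\<lambda>(s,Y). s *\<^sub>R B + Y) \<in> measurable (D k \<Otimes>\<^sub>M C k) (borel :: (real^'p^'p) measure)" for k
    by (subst measurable_cong_sets[OF sets_pair_measure_cong[OF DS CS] refl]) measurable
  have mw: "(\<lambda>s. ennreal (w k s)) \<in> borel_measurable \<rho>" for k
    by (subst measurable_cong_sets[OF rhoS refl]) (unfold w_def, measurable)
  have perk: "(\<integral>\<^sup>+ x. F x \<partial>\<nu> k) = (\<integral>\<^sup>+ s. ennreal (w k s) * (\<integral>\<^sup>+ Y. F (s *\<^sub>R B + Y) \<partial>C k) \<partial>\<rho>)"
    if mF: "F \<in> borel_measurable borel" for F k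
  proof -
    interpret c: sigma_finite_measure "C k" by (intro prob_space_imp_sigma_finite CP)
    have mF2: "(\<lambda>p. F (case p of (s, Y) \<Rightarrow> s *\<^sub>R B + Y)) \<in> borel_measurable (D k \<Otimes>\<^sub>M C k)"
      using measurable_compose[OF meas_map mF] by simp
    have "(\<integral>\<^sup>+ x. F x \<partial>\<nu> k) = (\<integral>\<^sup>+ p. F (case p of (s, Y) \<Rightarrow> s *\<^sub>R B + Y) \<partial>(D k \<Otimes>\<^sub>M C k))"
      unfolding \<nu>_def by (rule nn_integral_distr[OF meas_map]) (simp add: mF)
    also have "\<dots> = (\<integral>\<^sup>+ s. \<integral>\<^sup>+ Y. F (s *\<^sub>R B + Y) \<partial>C k \<partial>D k)"
      using c.nn_integral_fst[OF mF2] by simp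
    also have "\<dots> = (\<integral>\<^sup>+ s. ennreal (w k s) * (\<integral>\<^sup>+ Y. F (s *\<^sub>R B + Y) \<partial>C k) \<partial>\<rho>)"
      unfolding D_def
    proof (rule nn_integral_density[OF mw])
      have "(\<lambda>s. \<integral>\<^sup>+ Y. F (s *\<^sub>R B + Y) \<partial>C k) \<in> borel_measurable (D k)"
        using c.borel_measurable_nn_integral_fst[OF mF2] by simp
      then show "(\<lambda>s. \<integral>\<^sup>+ Y. F (s *\<^sub>R B + Y) \<partial>C k) \<in> borel_measurable \<rho>"
        using measurable_cong_sets[OF DS[of k] refl] measurable_cong_sets[OF rhoS refl] by blast
    qed
    finally show ?thesis .
  qed
  have w_le: "0 \<le> s \<Longrightarrow> w k s \<le> 1" for k s
    using pow_fact_le_exp[of s k] by (simp add: w_def exp_minus field_simps)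
  have w_nn: "0 \<le> s \<Longrightarrow> 0 \<le> w k s" for k s
    by (simp add: w_def)
  have sub: "subprob_space (\<nu> k)" for k
  proof (rule subprob_spaceI)
    interpret c: prob_space "C k" by (rule CP)
    have "emeasure (\<nu> k) (space (\<nu> k)) = (\<integral>\<^sup>+ x. 1 \<partial>\<nu> k)" by simp
    also have "\<dots> = (\<integral>\<^sup>+ s. ennreal (w k s) \<partial>\<rho>)"
      by (subst perk) (simp_all add: c.emeasure_space_1)
    also have "\<dots> \<le> (\<integral>\<^sup>+ s. 1 \<partial>\<rho>)"
      by (rule nn_integral_mono_AE) (use rhoA in \<open>eventually_elim, simp add: w_le\<close>)
    also have "\<dots> = 1" using prob_space.emeasure_space_1[OF rhoP] by simp
    finally show "emeasure (\<nu> k) (space (\<nu> k)) \<le> 1" .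
    show "space (\<nu> k) \<noteq> {}" by (simp add: \<nu>_def)
  qed
  have kern: "\<nu> \<in> measurable (count_space UNIV) (subprob_algebra borel)"
    using sub by (auto simp: space_subprob_algebra \<nu>_def)
  define N where "N = count_space UNIV \<bind> \<nu>"
  have NS: "sets N = sets borel"
    unfolding N_def by (rule sets_bind) (auto simp: \<nu>_def)
  have full: "(\<integral>\<^sup>+ x. F x \<partial>N) = (\<Sum>k. \<integral>\<^sup>+ x. F x \<partial>\<nu> k)" if mF: "F \<in> borel_measurable borel" for F
    unfolding N_def by (simp add: nn_integral_bind[OF mF kern] nn_integral_count_space_nat)
  define N' where "N' = restrict_space N Spsd"
  have N'S: "sets N' = sets (restrict_space borel Spsd)"
    unfolding N'_def by (rule sets_restrict_space_cong[OF NS])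
  show ?thesis
    unfolding mv_completely_monotone_def
  proof (intro conjI)
    show "\<forall>T\<in>Spd. 0 \<le> (\<phi> \<circ> g) T" using gdef phinn by (simp del: mv_bernstein_def) (metis gdef)
    show "\<exists>\<nu>::(real^'p^'p) measure. sets \<nu> = sets (restrict_space borel Spsd) \<and>
        (\<forall>T\<in>Spd. ennreal ((\<phi> \<circ> g) T) = (\<integral>\<^sup>+ X. ennreal (etr (- (T ** X))) \<partial>\<nu>))"
    proof (intro exI[of _ N'] conjI ballI)
      show "sets N' = sets (restrict_space borel Spsd)" by (rule N'S)
      fix T :: "real^'p^'p" assume T: "T \<in> Spd"
      show "ennreal ((\<phi> \<circ> g) T) = (\<integral>\<^sup>+ X. ennreal (etr (- (T ** X))) \<partial>N')"
      proof -
        have TS: "T \<in> Spsd" using T Spd_Spsd by blast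
        let ?E = "\<lambda>X. ennreal (etr (- (T ** X)))"
        have mE: "?E \<in> borel_measurable borel" by measurable
        have ebound: "X \<in> Spsd \<Longrightarrow> etr (- (T ** X)) \<le> 1" for X
          using trace_psd[OF TS, of X] by (simp add: etr_neg)
        define Lr where "Lr = (\<integral> X. etr (- (T ** X)) \<partial>\<mu>)"
        have mEmu: "(\<lambda>X. etr (- (T ** X))) \<in> borel_measurable \<mu>"
          using measurable_compose[OF idm meas_etr[of T]] by simp
        have intg: "integrable \<mu> (\<lambda>X. etr (- (T ** X)))"
        proof (rule mu.integrable_const_bound[where B=1])
          show "AE x in \<mu>. norm (etr (- (T ** x))) \<le> 1"
            by (rule AE_I2) (use ebound Spd_Spsd spmu in auto)
        qed (rule mEmu)
        have Lr_nn: "0 \<le> Lr" unfolding Lr_def by (rule Bochner_Integration.integral_nonneg) simp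
        have gT: "g T = trace (T ** B) + 1 - Lr"
        proof -
          have "(\<integral> X. (1 - etr (- (T ** X))) \<partial>\<mu>) = (\<integral> X. 1 \<partial>\<mu>) - Lr"
            unfolding Lr_def by (rule Bochner_Integration.integral_diff[OF _ intg]) simp
          moreover have "trace (0::real^'p^'p) = 0" by (simp add: trace_def)
          ultimately show ?thesis using gdef[OF T] trace_mul_sym[of B T] mu.prob_space by simp
        qed
        have Lp: "(\<integral>\<^sup>+ X. ?E X \<partial>\<mu>0) = ennreal Lr"
          unfolding \<mu>0_def Lr_def
          by (subst nn_integral_distr[OF idm]) (simp_all add: mE nn_integral_eq_integral[OF intg])
        define tB where "tB = trace (T ** B)"
        have tB: "0 \<le> tB" unfolding tB_def by (rule trace_psd[OF TS BS])
        have spN: "space N = UNIV" using sets_eq_imp_space_eq[OF NS] by simp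
        have mEi: "(\<lambda>X. ?E X * indicator Spsd X) \<in> borel_measurable borel" by measurable
        have "(\<integral>\<^sup>+ X. ?E X \<partial>N') = (\<integral>\<^sup>+ X. ?E X * indicator Spsd X \<partial>N)"
          unfolding N'_def by (subst nn_integral_restrict_space) (simp_all add: spN NS)
        also have "\<dots> = (\<Sum>k. \<integral>\<^sup>+ X. ?E X * indicator Spsd X \<partial>\<nu> k)"
          by (rule full[OF mEi])
        also have "\<dots> = (\<Sum>k. \<integral>\<^sup>+ s. ennreal (w k s) *
              (\<integral>\<^sup>+ Y. ?E (s *\<^sub>R B + Y) * indicator Spsd (s *\<^sub>R B + Y) \<partial>C k) \<partial>\<rho>)"
          by (simp add: perk[OF mEi])
        also have "\<dots> = (\<Sum>k. \<integral>\<^sup>+ s. ennreal (w k s * exp (- (s * tB)) * Lr ^ k) \<partial>\<rho>)"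
        proof (rule suminf_cong, rule nn_integral_cong_AE)
          fix k
          show "AE s in \<rho>. ennreal (w k s) *
              (\<integral>\<^sup>+ Y. ?E (s *\<^sub>R B + Y) * indicator Spsd (s *\<^sub>R B + Y) \<partial>C k) =
              ennreal (w k s * exp (- (s * tB)) * Lr ^ k)"
            using rhoA
          proof eventually_elim
            case (elim s)
            have "(\<integral>\<^sup>+ Y. ?E (s *\<^sub>R B + Y) * indicator Spsd (s *\<^sub>R B + Y) \<partial>C k) =
                (\<integral>\<^sup>+ Y. ennreal (exp (- (s * tB))) * ?E Y \<partial>C k)"
            proof (rule nn_integral_cong_AE)
              show "AE Y in C k. ?E (s *\<^sub>R B + Y) * indicator Spsd (s *\<^sub>R B + Y) =
                  ennreal (exp (- (s * tB))) * ?E Y"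
                using CA[of k]
              proof eventually_elim
                case (elim Y)
                then have "s *\<^sub>R B + Y \<in> Spsd" using Spsd_add Spsd_scale BS \<open>0 \<le> s\<close> by blast
                then show ?case by (simp add: etr_scale tB_def ennreal_mult)
              qed
            qed
            also have "\<dots> = ennreal (exp (- (s * tB))) * (\<integral>\<^sup>+ Y. ?E Y \<partial>C k)"
              by (rule nn_integral_cmult) (subst measurable_cong_sets[OF CS refl], rule mE)
            also have "\<dots> = ennreal (exp (- (s * tB))) * ennreal Lr ^ k"
              unfolding C_def cpow_nn[OF P0 S0 A0] Lp ..
            finally show ?case
              using elim w_nn[OF elim] Lr_nn by (simp add: ennreal_mult ennreal_power mult.assoc)
          qed
        qed
        also have "\<dots> = (\<integral>\<^sup>+ s. (\<Sum>k. ennreal (w k s * exp (- (s * tB)) * Lr ^ k)) \<partial>\<rho>)"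
          by (rule nn_integral_suminf[symmetric])
            (subst measurable_cong_sets[OF rhoS refl], unfold w_def, measurable)
        also have "\<dots> = (\<integral>\<^sup>+ s. ennreal (exp (- g T * s)) \<partial>\<rho>)"
        proof (rule nn_integral_cong_AE)
          show "AE s in \<rho>. (\<Sum>k. ennreal (w k s * exp (- (s * tB)) * Lr ^ k)) = ennreal (exp (- g T * s))"
            using rhoA
          proof eventually_elim
            case (elim s)
            have feq: "(\<lambda>k. w k s * exp (- (s * tB)) * Lr ^ k) =
                (\<lambda>k. (exp (- s) * exp (- (s * tB))) * ((s * Lr) ^ k /\<^sub>R fact k))"
              by (rule ext) (simp add: w_def power_mult_distrib field_simps)
            have sm: "(\<lambda>k. w k s * exp (- (s * tB)) * Lr ^ k) sums
                ((exp (- s) * exp (- (s * tB))) * exp (s * Lr))"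
              unfolding feq by (rule sums_mult[OF exp_converges])
            have "(\<Sum>k. ennreal (w k s * exp (- (s * tB)) * Lr ^ k)) =
                ennreal (\<Sum>k. w k s * exp (- (s * tB)) * Lr ^ k)"
              by (rule suminf_ennreal2) (use elim w_nn Lr_nn sm in \<open>auto intro: sums_summable\<close>)
            also have "(\<Sum>k. w k s * exp (- (s * tB)) * Lr ^ k) = (exp (- s) * exp (- (s * tB))) * exp (s * Lr)"
              using sm sums_unique by metis
            also have "\<dots> = exp (- g T * s)"
              by (simp add: mult_exp_exp gT tB_def algebra_simps)
            finally show ?case .
          qed
        qed
        also have "\<dots> = ennreal (\<phi> (g T))"
          using rep[rule_format, of "g T"] gdef[OF T] by (simp only:) simp
        finally show ?thesis by simp
      qed
    qed
  qed
qed


theorem proposition2p9: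
  fixes g :: "real^'p^'p \<Rightarrow> real"
    and B :: "real^'p^'p"
    and \<mu> :: "(real^'p^'p) measure"
    and \<phi> :: "real \<Rightarrow> real"
  assumes "mv_bernstein g 0 B \<mu>"
    and "prob_space \<mu>"
    and "continuous_on {0..} \<phi>"
    and "\<forall>x\<ge>0. 0 \<le> \<phi> x"
    and "completely_monotone \<phi>"
    and "\<phi> 0 = 1"
  shows "mv_completely_monotone (\<phi> \<circ> g)"
proof -
  obtain \<rho> :: "real measure" where "prob_space \<rho>" "sets \<rho> = sets borel" "AE s in \<rho>. 0 \<le> s"
    "\<forall>t\<ge>0. ennreal (\<phi> t) = (\<integral>\<^sup>+ s. ennreal (exp (- t * s)) \<partial>\<rho>)"
    using bernstein[OF assms(3) assms(5) assms(6)] by blast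
  then show ?thesis using assembly[OF assms(1) assms(2) assms(4)] by blast
qed

end
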